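(* Let $A$ be a Banach algebra. (a) If $A$ has no unit and has a two-sided approximate identity (not necessarily bounded), then there is a net $(y_\mu)_{\mu\in\Lambda_0}$ in $A$ such that $y_\mu x\to0$ and $xy_\mu\to 0$ for every $x\in A$, and $y_\mu\not\to 0$. (b) If $A$ has no left unit and has a left approximate identity, then there is a net $(y_\mu)$ in $A$ with $y_\mu x\to 0$ for every $x\in A$ and $y_\mu\not\to0$. (c) If $A$ has no right unit and has a right approximate identity, then there is a net $(y_\mu)$ in $A$ with $xy_\mu\to 0$ for every $x\in A$ and $y_\mu\not\to0$. *)

theory Defs
  imports "HOL-Analysis.Analysis"
begin

text \<open>Banach algebras are modelled by the type class
  real_normed_algebra + banach (associative, not necessarily commutative,
  not necessarily unital; submultiplicative complete norm).
  Nets are modelled, as is standard in Isabelle/HOL, by proper filters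
  on an index type: a net indexed by a directed set corresponds to its
  (proper) filter of tails, and convergence of the net is convergence
  along that filter.\<close>

definition identity_elem :: "'a::ring \<Rightarrow> bool" where
  "identity_elem u \<longleftrightarrow> (\<forall>x. u * x = x \<and> x * u = x)"

definition left_identity_elem :: "'a::ring \<Rightarrow> bool" where
  "left_identity_elem u \<longleftrightarrow> (\<forall>x. u * x = x)"

definition right_identity_elem :: "'a::ring \<Rightarrow> bool" where
  "right_identity_elem u \<longleftrightarrow> (\<forall>x. x * u = x)"

definition two_sided_approx_identity ::
    "'i filter \<Rightarrow> ('i \<Rightarrow> 'a::real_normed_algebra) \<Rightarrow> bool" where
  "two_sided_approx_identity F e \<longleftrightarrow> F \<noteq> bot \<and>
     (\<forall>x. ((\<lambda>i. e i * x) \<longlongrightarrow> x) F \<and> ((\<lambda>i. x * e i) \<longlongrightarrow> x) F)"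

definition left_approx_identity ::
    "'i filter \<Rightarrow> ('i \<Rightarrow> 'a::real_normed_algebra) \<Rightarrow> bool" where
  "left_approx_identity F e \<longleftrightarrow> F \<noteq> bot \<and>
     (\<forall>x. ((\<lambda>i. e i * x) \<longlongrightarrow> x) F)"

definition right_approx_identity ::
    "'i filter \<Rightarrow> ('i \<Rightarrow> 'a::real_normed_algebra) \<Rightarrow> bool" where
  "right_approx_identity F e \<longleftrightarrow> F \<noteq> bot \<and>
     (\<forall>x. ((\<lambda>i. x * e i) \<longlongrightarrow> x) F)"

end

theory Submission
  imports Defs
begin

lemma cauchy_net_conv:
  fixes e :: "'i \<Rightarrow> 'a::banach"
  assumes "((\<lambda>p. e (fst p) - e (snd p)) \<longlongrightarrow> 0) (F \<times>\<^sub>F F)"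
  shows "\<exists>u. (e \<longlongrightarrow> u) F"
proof -
  have "cauchy_filter (filtermap e F)"
    unfolding cauchy_filter_metric_filtermap
  proof (intro allI impI)
    fix r :: real assume "r > 0"
    then have "eventually (\<lambda>p. dist (e (fst p) - e (snd p)) 0 < r) (F \<times>\<^sub>F F)"
      using assms tendstoD by blast
    then obtain Q where "eventually Q F" "\<And>x y. Q x \<Longrightarrow> Q y \<Longrightarrow> dist (e x - e y) 0 < r"
      unfolding eventually_prod_same by force
    then show "\<exists>P. eventually P F \<and> (\<forall>x y. P x \<and> P y \<longrightarrow> dist (e x) (e y) < r)"
      by (auto simp: dist_norm)
  qed
  then have "convergent_filter (filtermap e F)"
    by (rule cauchy_filter_convergent)
  then obtain u where "filtermap e F \<le> nhds u"
    by (auto simp: convergent_filter_iff)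
  then show ?thesis unfolding filterlim_def by blast
qed

lemma diff_net:
  fixes f :: "'i \<Rightarrow> 'a::real_normed_algebra"
  assumes "((\<lambda>i. f i) \<longlongrightarrow> x) F"
  shows "((\<lambda>p. f (fst p) - f (snd p)) \<longlongrightarrow> 0) (F \<times>\<^sub>F F)"
proof -
  have a: "((\<lambda>p. f (fst p)) \<longlongrightarrow> x) (F \<times>\<^sub>F F)"
    using tendsto_compose_filtermap filterlim_compose[OF assms filterlim_fst] by blast
  have b: "((\<lambda>p. f (snd p)) \<longlongrightarrow> x) (F \<times>\<^sub>F F)"
    using filterlim_compose[OF assms filterlim_snd] by blast
  show ?thesis using tendsto_diff[OF a b] by simp
qed

lemma main_construct:
  fixes e :: "'i \<Rightarrow> 'a::{real_normed_algebra, banach}"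
  assumes F: "F \<noteq> bot" and nc: "\<not> (\<exists>u. (e \<longlongrightarrow> u) F)"
  defines "G \<equiv> filtermap (\<lambda>p. e (fst p) - e (snd p)) (F \<times>\<^sub>F F)"
  shows "G \<noteq> bot"
    and "\<And>x. ((\<lambda>i. e i * x) \<longlongrightarrow> x) F \<Longrightarrow> ((\<lambda>\<mu>. \<mu> * x) \<longlongrightarrow> 0) G"
    and "\<And>x. ((\<lambda>i. x * e i) \<longlongrightarrow> x) F \<Longrightarrow> ((\<lambda>\<mu>. x * \<mu>) \<longlongrightarrow> 0) G"
    and "\<not> ((\<lambda>\<mu>. \<mu>) \<longlongrightarrow> 0) G"
proof -
  show "G \<noteq> bot" using F by (simp add: G_def prod_filter_eq_bot filtermap_bot_iff)
next
  fix x assume "((\<lambda>i. e i * x) \<longlongrightarrow> x) F"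
  from diff_net[OF this] show "((\<lambda>\<mu>. \<mu> * x) \<longlongrightarrow> 0) G"
    by (simp add: G_def filterlim_filtermap algebra_simps)
next
  fix x assume "((\<lambda>i. x * e i) \<longlongrightarrow> x) F"
  from diff_net[OF this] show "((\<lambda>\<mu>. x * \<mu>) \<longlongrightarrow> 0) G"
    by (simp add: G_def filterlim_filtermap algebra_simps)
next
  show "\<not> ((\<lambda>\<mu>. \<mu>) \<longlongrightarrow> 0) G"
    using nc cauchy_net_conv[of e F] unfolding G_def filterlim_filtermap o_def by blast
qed

theorem corollary1p3:
  fixes a0 :: "'a::{real_normed_algebra, banach}"
    and I0 :: "'i itself"
  shows
   "((\<not> (\<exists>u::'a. identity_elem u)) \<and>
       (\<exists>(F::'i filter) (e::'i \<Rightarrow> 'a). two_sided_approx_identity F e)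
     \<longrightarrow> (\<exists>(G::'a filter) (y::'a \<Rightarrow> 'a). G \<noteq> bot \<and>
            (\<forall>x. ((\<lambda>\<mu>. y \<mu> * x) \<longlongrightarrow> 0) G \<and> ((\<lambda>\<mu>. x * y \<mu>) \<longlongrightarrow> 0) G) \<and>
            \<not> (y \<longlongrightarrow> 0) G))
    \<and>
    ((\<not> (\<exists>u::'a. left_identity_elem u)) \<and>
       (\<exists>(F::'i filter) (e::'i \<Rightarrow> 'a). left_approx_identity F e)
     \<longrightarrow> (\<exists>(G::'a filter) (y::'a \<Rightarrow> 'a). G \<noteq> bot \<and>
            (\<forall>x. ((\<lambda>\<mu>. y \<mu> * x) \<longlongrightarrow> 0) G) \<and>
            \<not> (y \<longlongrightarrow> 0) G))
    \<and>
    ((\<not> (\<exists>u::'a. right_identity_elem u)) \<and>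
       (\<exists>(F::'i filter) (e::'i \<Rightarrow> 'a). right_approx_identity F e)
     \<longrightarrow> (\<exists>(G::'a filter) (y::'a \<Rightarrow> 'a). G \<noteq> bot \<and>
            (\<forall>x. ((\<lambda>\<mu>. x * y \<mu>) \<longlongrightarrow> 0) G) \<and>
            \<not> (y \<longlongrightarrow> 0) G))"
proof (intro conjI impI)
  assume h: "(\<not> (\<exists>u::'a. identity_elem u)) \<and>
       (\<exists>(F::'i filter) (e::'i \<Rightarrow> 'a). two_sided_approx_identity F e)"
  then obtain F :: "'i filter" and e :: "'i \<Rightarrow> 'a" where F: "F \<noteq> bot"
    and l: "\<And>x. ((\<lambda>i. e i * x) \<longlongrightarrow> x) F" and r: "\<And>x. ((\<lambda>i. x * e i) \<longlongrightarrow> x) F"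
    unfolding two_sided_approx_identity_def by blast
  have nc: "\<not> (\<exists>u. (e \<longlongrightarrow> u) F)"
  proof
    assume "\<exists>u. (e \<longlongrightarrow> u) F"
    then obtain u where u: "(e \<longlongrightarrow> u) F" by blast
    have "identity_elem u" unfolding identity_elem_def
    proof
      fix x
      have "u * x = x" using tendsto_unique[OF F tendsto_mult[OF u tendsto_const] l] .
      moreover have "x * u = x" using tendsto_unique[OF F tendsto_mult[OF tendsto_const u] r] .
      ultimately show "u * x = x \<and> x * u = x" by simp
    qed
    then show False using h by blast
  qed
  show "\<exists>(G::'a filter) (y::'a \<Rightarrow> 'a). G \<noteq> bot \<and>
            (\<forall>x. ((\<lambda>\<mu>. y \<mu> * x) \<longlongrightarrow> 0) G \<and> ((\<lambda>\<mu>. x * y \<mu>) \<longlongrightarrow> 0) G) \<and>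
            \<not> (y \<longlongrightarrow> 0) G"
    apply (rule exI[of _ "filtermap (\<lambda>p. e (fst p) - e (snd p)) (F \<times>\<^sub>F F)"], rule exI[of _ "\<lambda>\<mu>. \<mu>"])
    using main_construct[OF F nc] l r by blast
next
  assume h: "(\<not> (\<exists>u::'a. left_identity_elem u)) \<and>
       (\<exists>(F::'i filter) (e::'i \<Rightarrow> 'a). left_approx_identity F e)"
  then obtain F :: "'i filter" and e :: "'i \<Rightarrow> 'a" where F: "F \<noteq> bot"
    and l: "\<And>x. ((\<lambda>i. e i * x) \<longlongrightarrow> x) F"
    unfolding left_approx_identity_def by blast
  have nc: "\<not> (\<exists>u. (e \<longlongrightarrow> u) F)"
  proof
    assume "\<exists>u. (e \<longlongrightarrow> u) F"
    then obtain u where u: "(e \<longlongrightarrow> u) F" by blast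
    have "left_identity_elem u" unfolding left_identity_elem_def
    proof
      fix x
      show "u * x = x" using tendsto_unique[OF F tendsto_mult[OF u tendsto_const] l] .
    qed
    then show False using h by blast
  qed
  show "\<exists>(G::'a filter) (y::'a \<Rightarrow> 'a). G \<noteq> bot \<and>
            (\<forall>x. ((\<lambda>\<mu>. y \<mu> * x) \<longlongrightarrow> 0) G) \<and>
            \<not> (y \<longlongrightarrow> 0) G"
    apply (rule exI[of _ "filtermap (\<lambda>p. e (fst p) - e (snd p)) (F \<times>\<^sub>F F)"], rule exI[of _ "\<lambda>\<mu>. \<mu>"])
    using main_construct[OF F nc] l by blast
next
  assume h: "(\<not> (\<exists>u::'a. right_identity_elem u)) \<and>
       (\<exists>(F::'i filter) (e::'i \<Rightarrow> 'a). right_approx_identity F e)"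
  then obtain F :: "'i filter" and e :: "'i \<Rightarrow> 'a" where F: "F \<noteq> bot"
    and r: "\<And>x. ((\<lambda>i. x * e i) \<longlongrightarrow> x) F"
    unfolding right_approx_identity_def by blast
  have nc: "\<not> (\<exists>u. (e \<longlongrightarrow> u) F)"
  proof
    assume "\<exists>u. (e \<longlongrightarrow> u) F"
    then obtain u where u: "(e \<longlongrightarrow> u) F" by blast
    have "right_identity_elem u" unfolding right_identity_elem_def
    proof
      fix x
      show "x * u = x" using tendsto_unique[OF F tendsto_mult[OF tendsto_const u] r] .
    qed
    then show False using h by blast
  qed
  show "\<exists>(G::'a filter) (y::'a \<Rightarrow> 'a). G \<noteq> bot \<and>
            (\<forall>x. ((\<lambda>\<mu>. x * y \<mu>) \<longlongrightarrow> 0) G) \<and>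
            \<not> (y \<longlongrightarrow> 0) G"
    apply (rule exI[of _ "filtermap (\<lambda>p. e (fst p) - e (snd p)) (F \<times>\<^sub>F F)"], rule exI[of _ "\<lambda>\<mu>. \<mu>"])
    using main_construct[OF F nc] r by blast
qed

end
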